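(* Let $\psi$ be the four-taxon network described in the context, with parameters $x,y>0$, $w=0$ and $\gamma\in[0,1]$, and one gene copy sampled per taxon. Under the multispecies network coalescent, as $x\to\infty$ the gene tree topology probabilities converge to: $P(((b,c),a),d)\to \gamma-(\gamma-\tfrac{\gamma^2}{3})e^{-y}$; $P(((b,c),d),a)\to (1-\gamma)-(\tfrac{2}{3}-\tfrac{\gamma}{3}-\tfrac{\gamma^2}{3})e^{-y}$; $P((a,b),(c,d))\to\gamma(1-\gamma)e^{-y}$ and $P((a,c),(b,d))\to\gamma(1-\gamma)e^{-y}$; $P(((a,b),c),d)\to\tfrac{\gamma^2}{3}e^{-y}$ and $P(((a,c),b),d)\to\tfrac{\gamma^2}{3}e^{-y}$; $P(a,(b,(c,d)))\to\tfrac{(1-\gamma)^2}{3}e^{-y}$ and $P(((b,d),c),a)\to\tfrac{(1-\gamma)^2}{3}e^{-y}$; and each of the remaining seven rooted gene tree topologies on $\{a,b,c,d\}$, namely $((a,d),(b,c))$, $(((a,b),d),c)$, $(b,(a,(c,d)))$, $(((a,d),b),c)$, $(((b,d),a),c)$, $(((a,c),d),b)$, $(((a,d),c),b)$, has probability converging to $0$.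
   Context: The network $\psi$ on taxa $A,B,C,D$ (gene copies $a,b,c,d$): the root $r$ has two children $p$ and $q$, with edges $(r,p)$ and $(r,q)$ both of length $x$. Node $p$ has children the leaf $A$ and a reticulation node $h$; node $q$ has children the leaf $D$ and $h$. The reticulation edges $(p,h)$ and $(q,h)$ have length $w=0$ and inheritance probabilities $\gamma$ and $1-\gamma$ respectively. Node $h$ has a single child $m$ via an edge of length $y$, and $m$ has the two leaf children $B$ and $C$. (Pendant edge lengths to leaves are irrelevant with one sample per taxon.) Multispecies network coalescent: gene lineages are traced backward in time from the leaves; within each branch every pair of lineages present coalesces independently at rate 1 per coalescent unit for the branch's duration; when a lineage reaches a reticulation node it independently enters the incoming edge $b$ with probability equal to its inheritance probability; above the root all remaining lineages coalesce. $P(g)$ is the resulting probability of gene tree topology $g$. *)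

theory Defs
  imports "HOL-Analysis.Analysis"
begin

text \<open>Rooted gene trees with leaves labelled by natural numbers
  (gene copies a = 0, b = 1, c = 2, d = 3).  A rooted topology is identified
  by its set of clusters, so the order of children is irrelevant.\<close>

datatype gtree = Lf nat | Nd gtree gtree

fun leaves :: "gtree \<Rightarrow> nat set" where
  "leaves (Lf i) = {i}"
| "leaves (Nd l r) = leaves l \<union> leaves r"

fun clusters :: "gtree \<Rightarrow> nat set set" where
  "clusters (Lf i) = {{i}}"
| "clusters (Nd l r) = insert (leaves l \<union> leaves r) (clusters l \<union> clusters r)"

definition same_topology :: "gtree \<Rightarrow> gtree \<Rightarrow> bool" where
  "same_topology s t \<longleftrightarrow> clusters s = clusters t"

definition ga :: gtree where "ga = Lf 0"
definition gb :: gtree where "gb = Lf 1"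
definition gc :: gtree where "gc = Lf 2"
definition gd :: gtree where "gd = Lf 3"

text \<open>A state is a list of lineages (the subtrees formed so far).
  The functions below compute expectations E[f(state)] of a test function f.\<close>

definition pairs :: "nat \<Rightarrow> (nat \<times> nat) list" where
  "pairs n = [(i, j). j \<leftarrow> [0..<n], i \<leftarrow> [0..<j]]"

definition merge :: "nat \<Rightarrow> nat \<Rightarrow> gtree list \<Rightarrow> gtree list" where
  "merge i j L = Nd (L ! i) (L ! j) # [L ! k. k \<leftarrow> [0..<length L], k \<noteq> i \<and> k \<noteq> j]"

text \<open>Total coalescence rate: every pair coalesces at rate 1.\<close>
definition crate :: "gtree list \<Rightarrow> real" where
  "crate L = real (length L choose 2)"

text \<open>Continuous-time coalescent on a branch of length t, defined by the
  first-jump decomposition: with no event before t (probability exp(-crate*t))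
  the state is unchanged; otherwise the first event is the coalescence of a
  given pair (i,j) at time s, with density exp(-crate*s) * 1, after which the
  process restarts for the remaining time t - s.  The nat argument is fuel
  (each event reduces the number of lineages).\<close>
primrec coalF :: "nat \<Rightarrow> real \<Rightarrow> (gtree list \<Rightarrow> real) \<Rightarrow> gtree list \<Rightarrow> real" where
  "coalF 0 t f L = f L"
| "coalF (Suc k) t f L =
     (if length L \<le> 1 then f L
      else exp (- crate L * t) * f L +
        (\<Sum>(i, j) \<leftarrow> pairs (length L).
           integral {0..t} (\<lambda>s. exp (- crate L * s) * coalF k (t - s) f (merge i j L))))"

definition coal :: "real \<Rightarrow> (gtree list \<Rightarrow> real) \<Rightarrow> gtree list \<Rightarrow> real" where
  "coal t f L = coalF (length L) t f L"

text \<open>Above the root all lineages coalesce (infinite branch): the successive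
  coalescing pairs are chosen uniformly among the current pairs (jump chain of
  the coalescent; each pair has rate 1).\<close>
primrec rootF :: "nat \<Rightarrow> (gtree list \<Rightarrow> real) \<Rightarrow> gtree list \<Rightarrow> real" where
  "rootF 0 f L = f L"
| "rootF (Suc k) f L =
     (if length L \<le> 1 then f L
      else (\<Sum>(i, j) \<leftarrow> pairs (length L). (1 / crate L) * rootF k f (merge i j L)))"

definition rootcoal :: "(gtree list \<Rightarrow> real) \<Rightarrow> gtree list \<Rightarrow> real" where
  "rootcoal f L = rootF (length L) f L"

text \<open>Reticulation: each lineage independently goes to the first parent with
  probability gamma and to the second with probability 1 - gamma.\<close>
definition reticulate :: "real \<Rightarrow> (gtree list \<Rightarrow> gtree list \<Rightarrow> real) \<Rightarrow> gtree list \<Rightarrow> real" where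
  "reticulate \<gamma> f L =
     (\<Sum>S \<in> Pow {0..<length L}.
        \<gamma> ^ card S * (1 - \<gamma>) ^ (length L - card S) *
        f (nths L S) (nths L ({0..<length L} - S)))"

definition is_topology :: "gtree \<Rightarrow> gtree list \<Rightarrow> real" where
  "is_topology g L = (case L of [T] \<Rightarrow> (if same_topology T g then 1 else 0) | _ \<Rightarrow> 0)"

text \<open>Probability of gene tree topology g under the MSNC on psi with
  parameters x (edges (r,p),(r,q)), y (edge (h,m)), w (edges (p,h),(q,h)) and
  inheritance probability gamma on (p,h).  Lineages b, c start at m, traverse
  (h,m), split at h; the p-part traverses (p,h) and joins a at p, the q-part
  traverses (q,h) and joins d at q; both traverse their edges to r and then
  coalesce above the root.\<close>
definition netP :: "real \<Rightarrow> real \<Rightarrow> real \<Rightarrow> real \<Rightarrow> gtree \<Rightarrow> real" where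
  "netP x y w \<gamma> g =
     coal y (\<lambda>Lh.
       reticulate \<gamma> (\<lambda>Lp Lq.
         coal w (\<lambda>Lp'.
           coal w (\<lambda>Lq'.
             coal x (\<lambda>Lrp.
               coal x (\<lambda>Lrq.
                 rootcoal (is_topology g) (Lrp @ Lrq))
               (Lq' @ [gd]))
             (Lp' @ [ga]))
           Lq)
         Lp)
       Lh)
     [gb, gc]"

end

theory Submission
  imports Defs
begin


lemma coalF_zero: "coalF k 0 f L = f L"
  by (induction k arbitrary: f L) (auto simp: case_prod_unfold)

lemma pairs2: "pairs (Suc (Suc 0)) = [(0,Suc 0)]" by (simp add: pairs_def)
lemma pairs3: "pairs (Suc (Suc (Suc 0))) = [(0,Suc 0),(0,Suc (Suc 0)),(Suc 0,Suc (Suc 0))]" by (simp add: pairs_def upt_rec)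

lemma merge2: "merge 0 (Suc 0) [A,B] = [Nd A B]"
  by (simp add: merge_def eval_nat_numeral upt_rec)
lemma merge3: "merge 0 (Suc 0) [A,B,C] = [Nd A B, C]" "merge 0 (Suc (Suc 0)) [A,B,C] = [Nd A C, B]" "merge (Suc 0) (Suc (Suc 0)) [A,B,C] = [Nd B C, A]"
  by (simp_all add: merge_def eval_nat_numeral upt_rec)

lemma crate2: "crate [A,B] = 1" by (simp add: crate_def numeral_2_eq_2)
lemma crate3: "crate [A,B,C] = 3" by (simp add: crate_def numeral_2_eq_2)

lemma deriv_aux: fixes c u :: real shows "c > 0 \<Longrightarrow> ((\<lambda>u. - exp (-(c*u))/c) has_real_derivative exp (-(c*u))) (at u within S)"
  by (rule derivative_eq_intros refl | simp)+

lemma int_exp: fixes c T :: real assumes "c > 0" "T \<ge> 0"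
  shows "((\<lambda>u. exp (- (c*u))) has_integral (1 - exp (-(c*T)))/c) {0..T}"
proof -
  have "((\<lambda>u. exp (- (c*u))) has_integral ((\<lambda>u. - exp (-(c*u))/c) T - (\<lambda>u. - exp (-(c*u))/c) 0)) {0..T}"
  proof (rule fundamental_theorem_of_calculus[of 0 T "\<lambda>u. - exp (-(c*u))/c" "\<lambda>u. exp (- (c*u))"])
    fix u assume "u \<in> {0..T}"
    have "((\<lambda>u. - exp (-(c*u))/c) has_real_derivative exp (- (c*u))) (at u within {0..T})"
      by (rule deriv_aux[OF assms(1)])
    then show "((\<lambda>u. - exp (-(c*u))/c) has_vector_derivative exp (- (c*u))) (at u within {0..T})"
      by (simp add: has_real_derivative_iff_has_vector_derivative)
  qed (use assms in simp)
  then show ?thesis by (simp add: diff_divide_distrib)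
qed

lemma coal2F: assumes "t \<ge> 0"
  shows "coalF (Suc (Suc 0)) t f [A,B] = exp (-t) * f [A,B] + (1 - exp (-t)) * f [Nd A B]"
proof -
  have "integral {0..t} (\<lambda>s. exp (- s) * f [Nd A B]) = (1 - exp (-t)) * f [Nd A B]"
    using int_exp[of 1 t] assms
    by (simp add: integral_mult_left has_integral_integrable_integral)
  then show ?thesis
    by (simp add: crate2 pairs2 merge2)
qed

definition gg :: "real \<Rightarrow> real \<Rightarrow> real \<Rightarrow> real" where
  "gg t P Q = exp (-t) * (P - Q) * (1 - exp (-(2*t))) / 2 + Q * (1 - exp (-(3*t))) / 3"

lemma I3: fixes t P Q :: real assumes "t \<ge> 0"
  shows "integral {0..t} (\<lambda>s. exp (- (3 * s)) * (exp (- (t - s)) * P + (1 - exp (- (t - s))) * Q)) = gg t P Q"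
proof -
  have eq: "exp (- (3 * s)) * (exp (- (t - s)) * P + (1 - exp (- (t - s))) * Q)
      = exp (-t) * (P - Q) * exp (-(2 * s)) + Q * exp (-(3 * s))" for s
  proof -
    have "exp (- (3 * s)) * exp (- (t - s)) = exp (-t) * exp (-(2 * s))"
      by (simp add: exp_add[symmetric] algebra_simps)
    then show ?thesis by (simp add: algebra_simps)
  qed
  have "((\<lambda>s. exp (-t) * (P - Q) * exp (-(2 * s)) + Q * exp (-(3 * s))) has_integral
        exp (-t) * (P - Q) * ((1 - exp (-(2*t)))/2) + Q * ((1 - exp (-(3*t)))/3)) {0..t}"
    by (intro has_integral_add has_integral_mult_right int_exp) (use assms in auto)
  then have "((\<lambda>s. exp (- (3 * s)) * (exp (- (t - s)) * P + (1 - exp (- (t - s))) * Q)) has_integral gg t P Q) {0..t}"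
    unfolding eq gg_def by simp
  then show ?thesis by (rule integral_unique)
qed

lemma coal3F: assumes "t \<ge> 0"
  shows "coalF (Suc (Suc (Suc 0))) t f [A,B,C] = exp (- 3 * t) * f [A,B,C]
     + gg t (f [Nd A B, C]) (f [Nd (Nd A B) C])
     + gg t (f [Nd A C, B]) (f [Nd (Nd A C) B])
     + gg t (f [Nd B C, A]) (f [Nd (Nd B C) A])"
proof -
  have c: "integral {0..t} (\<lambda>s. exp (- (3 * s)) * coalF (Suc (Suc 0)) (t - s) f [X, Y])
     = gg t (f [X,Y]) (f [Nd X Y])" for X Y
  proof -
    have "integral {0..t} (\<lambda>s. exp (- (3 * s)) * coalF (Suc (Suc 0)) (t - s) f [X, Y])
      = integral {0..t} (\<lambda>s. exp (- (3 * s)) * (exp (- (t - s)) * f [X,Y] + (1 - exp (- (t - s))) * f [Nd X Y]))"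
      by (rule integral_cong) (auto simp del: coalF.simps simp add: coal2F)
    then show ?thesis using I3[OF assms] by simp
  qed
  show ?thesis
    by (simp del: coalF.simps add: coalF.simps(2)[of "Suc (Suc 0)"] crate3 pairs3 merge3 c)
qed

lemma exp_lim: fixes c :: real assumes "c > 0" shows "((\<lambda>x. exp (- (c*x))) \<longlongrightarrow> 0) at_top"
proof -
  have "filterlim (\<lambda>x::real. c*x) at_top at_top"
    by (rule filterlim_tendsto_pos_mult_at_top[OF tendsto_const assms filterlim_ident])
  then have "filterlim (\<lambda>x::real. -(c*x)) at_bot at_top"
    by (simp add: filterlim_uminus_at_top)
  then show ?thesis by (rule filterlim_compose[OF exp_at_bot])
qed

lemma exp_lim1: "((\<lambda>x::real. exp (- x)) \<longlongrightarrow> 0) at_top"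
  using exp_lim[of 1] by simp
lemma exp_lim2: "((\<lambda>x::real. exp (- (2*x))) \<longlongrightarrow> 0) at_top"
  using exp_lim[of 2] by simp
lemma exp_lim3: "((\<lambda>x::real. exp (- (3*x))) \<longlongrightarrow> 0) at_top"
  using exp_lim[of 3] by simp

lemma coal1: "coal t f [A] = f [A]" by (simp add: coal_def)

lemma coal2: "t \<ge> 0 \<Longrightarrow> coal t f [A,B] = exp (-t) * f [A,B] + (1 - exp (-t)) * f [Nd A B]"
  by (simp del: coalF.simps add: coal_def coal2F)

lemma coal3: "t \<ge> 0 \<Longrightarrow> coal t f [A,B,C] = exp (- 3 * t) * f [A,B,C]
     + gg t (f [Nd A B, C]) (f [Nd (Nd A B) C])
     + gg t (f [Nd A C, B]) (f [Nd (Nd A C) B])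
     + gg t (f [Nd B C, A]) (f [Nd (Nd B C) A])"
  by (simp del: coalF.simps add: coal_def coal3F)

lemma gg_lim: "((\<lambda>t. gg t P Q) \<longlongrightarrow> Q / 3) at_top"
  unfolding gg_def
  by (rule tendsto_eq_intros exp_lim1 exp_lim2 exp_lim3 tendsto_const refl | simp)+

lemma lim2: "((\<lambda>x. coal x f [A,B]) \<longlongrightarrow> f [Nd A B]) at_top"
proof -
  have "((\<lambda>x. exp (-x) * f [A,B] + (1 - exp (-x)) * f [Nd A B]) \<longlongrightarrow> f [Nd A B]) at_top"
    by (rule tendsto_eq_intros exp_lim1 tendsto_const refl | simp)+
  then show ?thesis
    by (rule Lim_transform_eventually)
       (use eventually_ge_at_top[of "0::real"] in \<open>eventually_elim, simp add: coal2\<close>)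
qed

lemma lim3: "((\<lambda>x. coal x f [A,B,C]) \<longlongrightarrow>
   (f [Nd (Nd A B) C] + f [Nd (Nd A C) B] + f [Nd (Nd B C) A]) / 3) at_top"
proof -
  have "((\<lambda>x. coal x f [A,B,C]) \<longlongrightarrow>
     0 * f [A,B,C] + f [Nd (Nd A B) C] / 3 + f [Nd (Nd A C) B] / 3 + f [Nd (Nd B C) A] / 3) at_top"
  proof -
  have "((\<lambda>x. exp (- 3 * x) * f [A,B,C]
     + gg x (f [Nd A B, C]) (f [Nd (Nd A B) C])
     + gg x (f [Nd A C, B]) (f [Nd (Nd A C) B])
     + gg x (f [Nd B C, A]) (f [Nd (Nd B C) A])) \<longlongrightarrow>
     0 * f [A,B,C] + f [Nd (Nd A B) C] / 3 + f [Nd (Nd A C) B] / 3 + f [Nd (Nd B C) A] / 3) at_top"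
    by (intro tendsto_add tendsto_mult gg_lim tendsto_const) (use exp_lim3 in simp)
  then show ?thesis
    by (rule Lim_transform_eventually)
       (use eventually_ge_at_top[of "0::real"] in \<open>eventually_elim, simp add: coal3\<close>)
  qed
  then show ?thesis by (rule tendsto_eq_rhs) (simp add: add_divide_distrib)
qed

lemma lim22: "((\<lambda>x. coal x (\<lambda>L. coal x (h L) [B,D]) [A,C]) \<longlongrightarrow> h [Nd A C] [Nd B D]) at_top"
proof -
  have "((\<lambda>x. exp (-x) * (exp (-x) * h [A,C] [B,D] + (1 - exp (-x)) * h [A,C] [Nd B D])
         + (1 - exp (-x)) * (exp (-x) * h [Nd A C] [B,D] + (1 - exp (-x)) * h [Nd A C] [Nd B D]))
        \<longlongrightarrow> h [Nd A C] [Nd B D]) at_top"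
    by (rule tendsto_eq_intros exp_lim1 tendsto_const refl | simp)+
  then show ?thesis
    by (rule Lim_transform_eventually)
       (use eventually_ge_at_top[of "0::real"] in \<open>eventually_elim, simp add: coal2\<close>)
qed

lemma ret2: "reticulate \<gamma> F [A,B] = \<gamma>^2 * F [A,B] [] + \<gamma>*(1-\<gamma>) * F [A] [B] + \<gamma>*(1-\<gamma>) * F [B] [A] + (1-\<gamma>)^2 * F [] [A,B]"
proof -
  have P: "Pow {0..<Suc (Suc 0)} = {{}, {0}, {Suc 0}, {0, Suc 0}}"
    by (auto simp: Pow_insert atLeast0LessThan lessThan_Suc insert_commute)
  show ?thesis
    by (simp add: reticulate_def P nths_Cons power2_eq_square)
qed

lemma ret1: "reticulate \<gamma> F [A] = \<gamma> * F [A] [] + (1-\<gamma>) * F [] [A]"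
proof -
  have P: "Pow {0::nat} = {{}, {0}}"
    by (auto simp: Pow_insert)
  show ?thesis
    by (simp add: reticulate_def P nths_Cons)
qed

lemma root2: "rootcoal f [X,Y] = f [Nd X Y]"
  by (simp add: rootcoal_def crate2 pairs2 merge2)

lemma coal0: "coal 0 f L = f L" by (simp add: coal_def coalF_zero)

abbreviation V :: "gtree \<Rightarrow> gtree list \<Rightarrow> real" where "V g L \<equiv> rootcoal (is_topology g) L"

lemma netP_eq: "y \<ge> 0 \<Longrightarrow> netP x y 0 \<gamma> g =
  exp (-y) * (\<gamma>^2 * coal x (\<lambda>L. V g (L @ [gd])) [gb,gc,ga]
     + \<gamma>*(1-\<gamma>) * coal x (\<lambda>L. coal x (\<lambda>L'. V g (L @ L')) [gc,gd]) [gb,ga]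
     + \<gamma>*(1-\<gamma>) * coal x (\<lambda>L. coal x (\<lambda>L'. V g (L @ L')) [gb,gd]) [gc,ga]
     + (1-\<gamma>)^2 * coal x (\<lambda>L'. V g (ga # L')) [gb,gc,gd])
  + (1 - exp (-y)) * (\<gamma> * coal x (\<lambda>L. V g (L @ [gd])) [Nd gb gc, ga]
     + (1-\<gamma>) * coal x (\<lambda>L'. V g (ga # L')) [Nd gb gc, gd])"
  by (simp add: netP_def coal0 coal2 ret2 ret1 coal1)

lemma netP_lim: "y \<ge> 0 \<Longrightarrow> ((\<lambda>x. netP x y 0 \<gamma> g) \<longlongrightarrow>
  exp (-y) * (\<gamma>^2 * ((V g [Nd (Nd gb gc) ga, gd] + V g [Nd (Nd gb ga) gc, gd] + V g [Nd (Nd gc ga) gb, gd]) / 3)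
     + \<gamma>*(1-\<gamma>) * V g [Nd gb ga, Nd gc gd]
     + \<gamma>*(1-\<gamma>) * V g [Nd gc ga, Nd gb gd]
     + (1-\<gamma>)^2 * ((V g [ga, Nd (Nd gb gc) gd] + V g [ga, Nd (Nd gb gd) gc] + V g [ga, Nd (Nd gc gd) gb]) / 3))
  + (1 - exp (-y)) * (\<gamma> * V g [Nd (Nd gb gc) ga, gd] + (1-\<gamma>) * V g [ga, Nd (Nd gb gc) gd])) at_top"
  unfolding netP_eq
  by (intro tendsto_add tendsto_mult tendsto_const lim3[THEN tendsto_eq_rhs] lim22[where h="\<lambda>L L'. V g (L @ L')", THEN tendsto_eq_rhs] lim2[THEN tendsto_eq_rhs]) simp_all

lemma st_0_0: "same_topology (Nd (Nd (Nd gb gc) ga) gd) (Nd (Nd (Nd gb gc) ga) gd) = True" by code_simp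
lemma st_0_1: "same_topology (Nd (Nd (Nd gb ga) gc) gd) (Nd (Nd (Nd gb gc) ga) gd) = False" by code_simp
lemma st_0_2: "same_topology (Nd (Nd (Nd gc ga) gb) gd) (Nd (Nd (Nd gb gc) ga) gd) = False" by code_simp
lemma st_0_3: "same_topology (Nd (Nd gb ga) (Nd gc gd)) (Nd (Nd (Nd gb gc) ga) gd) = False" by code_simp
lemma st_0_4: "same_topology (Nd (Nd gc ga) (Nd gb gd)) (Nd (Nd (Nd gb gc) ga) gd) = False" by code_simp
lemma st_0_5: "same_topology (Nd ga (Nd (Nd gb gc) gd)) (Nd (Nd (Nd gb gc) ga) gd) = False" by code_simp
lemma st_0_6: "same_topology (Nd ga (Nd (Nd gb gd) gc)) (Nd (Nd (Nd gb gc) ga) gd) = False" by code_simp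
lemma st_0_7: "same_topology (Nd ga (Nd (Nd gc gd) gb)) (Nd (Nd (Nd gb gc) ga) gd) = False" by code_simp
lemma case_0: assumes "y > 0" shows "((\<lambda>x. netP x y 0 \<gamma> (Nd (Nd (Nd gb gc) ga) gd)) \<longlongrightarrow> \<gamma> - (\<gamma> - \<gamma>^2/3) * exp (-y)) at_top"
  apply (rule netP_lim[THEN tendsto_eq_rhs])
  using assms apply simp
  apply (simp add: root2 is_topology_def st_0_0 st_0_1 st_0_2 st_0_3 st_0_4 st_0_5 st_0_6 st_0_7)
  apply (simp add: field_simps power2_eq_square)?
  done

lemma st_1_0: "same_topology (Nd (Nd (Nd gb gc) ga) gd) (Nd (Nd (Nd gb gc) gd) ga) = False" by code_simp
lemma st_1_1: "same_topology (Nd (Nd (Nd gb ga) gc) gd) (Nd (Nd (Nd gb gc) gd) ga) = False" by code_simp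
lemma st_1_2: "same_topology (Nd (Nd (Nd gc ga) gb) gd) (Nd (Nd (Nd gb gc) gd) ga) = False" by code_simp
lemma st_1_3: "same_topology (Nd (Nd gb ga) (Nd gc gd)) (Nd (Nd (Nd gb gc) gd) ga) = False" by code_simp
lemma st_1_4: "same_topology (Nd (Nd gc ga) (Nd gb gd)) (Nd (Nd (Nd gb gc) gd) ga) = False" by code_simp
lemma st_1_5: "same_topology (Nd ga (Nd (Nd gb gc) gd)) (Nd (Nd (Nd gb gc) gd) ga) = True" by code_simp
lemma st_1_6: "same_topology (Nd ga (Nd (Nd gb gd) gc)) (Nd (Nd (Nd gb gc) gd) ga) = False" by code_simp
lemma st_1_7: "same_topology (Nd ga (Nd (Nd gc gd) gb)) (Nd (Nd (Nd gb gc) gd) ga) = False" by code_simp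
lemma case_1: assumes "y > 0" shows "((\<lambda>x. netP x y 0 \<gamma> (Nd (Nd (Nd gb gc) gd) ga)) \<longlongrightarrow> (1 - \<gamma>) - (2/3 - \<gamma>/3 - \<gamma>^2/3) * exp (-y)) at_top"
  apply (rule netP_lim[THEN tendsto_eq_rhs])
  using assms apply simp
  apply (simp add: root2 is_topology_def st_1_0 st_1_1 st_1_2 st_1_3 st_1_4 st_1_5 st_1_6 st_1_7)
  apply (simp add: field_simps power2_eq_square)?
  done

lemma st_2_0: "same_topology (Nd (Nd (Nd gb gc) ga) gd) (Nd (Nd ga gb) (Nd gc gd)) = False" by code_simp
lemma st_2_1: "same_topology (Nd (Nd (Nd gb ga) gc) gd) (Nd (Nd ga gb) (Nd gc gd)) = False" by code_simp
lemma st_2_2: "same_topology (Nd (Nd (Nd gc ga) gb) gd) (Nd (Nd ga gb) (Nd gc gd)) = False" by code_simp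
lemma st_2_3: "same_topology (Nd (Nd gb ga) (Nd gc gd)) (Nd (Nd ga gb) (Nd gc gd)) = True" by code_simp
lemma st_2_4: "same_topology (Nd (Nd gc ga) (Nd gb gd)) (Nd (Nd ga gb) (Nd gc gd)) = False" by code_simp
lemma st_2_5: "same_topology (Nd ga (Nd (Nd gb gc) gd)) (Nd (Nd ga gb) (Nd gc gd)) = False" by code_simp
lemma st_2_6: "same_topology (Nd ga (Nd (Nd gb gd) gc)) (Nd (Nd ga gb) (Nd gc gd)) = False" by code_simp
lemma st_2_7: "same_topology (Nd ga (Nd (Nd gc gd) gb)) (Nd (Nd ga gb) (Nd gc gd)) = False" by code_simp
lemma case_2: assumes "y > 0" shows "((\<lambda>x. netP x y 0 \<gamma> (Nd (Nd ga gb) (Nd gc gd))) \<longlongrightarrow> \<gamma> * (1 - \<gamma>) * exp (-y)) at_top"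
  apply (rule netP_lim[THEN tendsto_eq_rhs])
  using assms apply simp
  apply (simp add: root2 is_topology_def st_2_0 st_2_1 st_2_2 st_2_3 st_2_4 st_2_5 st_2_6 st_2_7)
  apply (simp add: field_simps power2_eq_square)?
  done

lemma st_3_0: "same_topology (Nd (Nd (Nd gb gc) ga) gd) (Nd (Nd ga gc) (Nd gb gd)) = False" by code_simp
lemma st_3_1: "same_topology (Nd (Nd (Nd gb ga) gc) gd) (Nd (Nd ga gc) (Nd gb gd)) = False" by code_simp
lemma st_3_2: "same_topology (Nd (Nd (Nd gc ga) gb) gd) (Nd (Nd ga gc) (Nd gb gd)) = False" by code_simp
lemma st_3_3: "same_topology (Nd (Nd gb ga) (Nd gc gd)) (Nd (Nd ga gc) (Nd gb gd)) = False" by code_simp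
lemma st_3_4: "same_topology (Nd (Nd gc ga) (Nd gb gd)) (Nd (Nd ga gc) (Nd gb gd)) = True" by code_simp
lemma st_3_5: "same_topology (Nd ga (Nd (Nd gb gc) gd)) (Nd (Nd ga gc) (Nd gb gd)) = False" by code_simp
lemma st_3_6: "same_topology (Nd ga (Nd (Nd gb gd) gc)) (Nd (Nd ga gc) (Nd gb gd)) = False" by code_simp
lemma st_3_7: "same_topology (Nd ga (Nd (Nd gc gd) gb)) (Nd (Nd ga gc) (Nd gb gd)) = False" by code_simp
lemma case_3: assumes "y > 0" shows "((\<lambda>x. netP x y 0 \<gamma> (Nd (Nd ga gc) (Nd gb gd))) \<longlongrightarrow> \<gamma> * (1 - \<gamma>) * exp (-y)) at_top"
  apply (rule netP_lim[THEN tendsto_eq_rhs])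
  using assms apply simp
  apply (simp add: root2 is_topology_def st_3_0 st_3_1 st_3_2 st_3_3 st_3_4 st_3_5 st_3_6 st_3_7)
  apply (simp add: field_simps power2_eq_square)?
  done

lemma st_4_0: "same_topology (Nd (Nd (Nd gb gc) ga) gd) (Nd (Nd (Nd ga gb) gc) gd) = False" by code_simp
lemma st_4_1: "same_topology (Nd (Nd (Nd gb ga) gc) gd) (Nd (Nd (Nd ga gb) gc) gd) = True" by code_simp
lemma st_4_2: "same_topology (Nd (Nd (Nd gc ga) gb) gd) (Nd (Nd (Nd ga gb) gc) gd) = False" by code_simp
lemma st_4_3: "same_topology (Nd (Nd gb ga) (Nd gc gd)) (Nd (Nd (Nd ga gb) gc) gd) = False" by code_simp
lemma st_4_4: "same_topology (Nd (Nd gc ga) (Nd gb gd)) (Nd (Nd (Nd ga gb) gc) gd) = False" by code_simp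
lemma st_4_5: "same_topology (Nd ga (Nd (Nd gb gc) gd)) (Nd (Nd (Nd ga gb) gc) gd) = False" by code_simp
lemma st_4_6: "same_topology (Nd ga (Nd (Nd gb gd) gc)) (Nd (Nd (Nd ga gb) gc) gd) = False" by code_simp
lemma st_4_7: "same_topology (Nd ga (Nd (Nd gc gd) gb)) (Nd (Nd (Nd ga gb) gc) gd) = False" by code_simp
lemma case_4: assumes "y > 0" shows "((\<lambda>x. netP x y 0 \<gamma> (Nd (Nd (Nd ga gb) gc) gd)) \<longlongrightarrow> \<gamma>^2/3 * exp (-y)) at_top"
  apply (rule netP_lim[THEN tendsto_eq_rhs])
  using assms apply simp
  apply (simp add: root2 is_topology_def st_4_0 st_4_1 st_4_2 st_4_3 st_4_4 st_4_5 st_4_6 st_4_7)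
  apply (simp add: field_simps power2_eq_square)?
  done

lemma st_5_0: "same_topology (Nd (Nd (Nd gb gc) ga) gd) (Nd (Nd (Nd ga gc) gb) gd) = False" by code_simp
lemma st_5_1: "same_topology (Nd (Nd (Nd gb ga) gc) gd) (Nd (Nd (Nd ga gc) gb) gd) = False" by code_simp
lemma st_5_2: "same_topology (Nd (Nd (Nd gc ga) gb) gd) (Nd (Nd (Nd ga gc) gb) gd) = True" by code_simp
lemma st_5_3: "same_topology (Nd (Nd gb ga) (Nd gc gd)) (Nd (Nd (Nd ga gc) gb) gd) = False" by code_simp
lemma st_5_4: "same_topology (Nd (Nd gc ga) (Nd gb gd)) (Nd (Nd (Nd ga gc) gb) gd) = False" by code_simp
lemma st_5_5: "same_topology (Nd ga (Nd (Nd gb gc) gd)) (Nd (Nd (Nd ga gc) gb) gd) = False" by code_simp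
lemma st_5_6: "same_topology (Nd ga (Nd (Nd gb gd) gc)) (Nd (Nd (Nd ga gc) gb) gd) = False" by code_simp
lemma st_5_7: "same_topology (Nd ga (Nd (Nd gc gd) gb)) (Nd (Nd (Nd ga gc) gb) gd) = False" by code_simp
lemma case_5: assumes "y > 0" shows "((\<lambda>x. netP x y 0 \<gamma> (Nd (Nd (Nd ga gc) gb) gd)) \<longlongrightarrow> \<gamma>^2/3 * exp (-y)) at_top"
  apply (rule netP_lim[THEN tendsto_eq_rhs])
  using assms apply simp
  apply (simp add: root2 is_topology_def st_5_0 st_5_1 st_5_2 st_5_3 st_5_4 st_5_5 st_5_6 st_5_7)
  apply (simp add: field_simps power2_eq_square)?
  done

lemma st_6_0: "same_topology (Nd (Nd (Nd gb gc) ga) gd) (Nd ga (Nd gb (Nd gc gd))) = False" by code_simp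
lemma st_6_1: "same_topology (Nd (Nd (Nd gb ga) gc) gd) (Nd ga (Nd gb (Nd gc gd))) = False" by code_simp
lemma st_6_2: "same_topology (Nd (Nd (Nd gc ga) gb) gd) (Nd ga (Nd gb (Nd gc gd))) = False" by code_simp
lemma st_6_3: "same_topology (Nd (Nd gb ga) (Nd gc gd)) (Nd ga (Nd gb (Nd gc gd))) = False" by code_simp
lemma st_6_4: "same_topology (Nd (Nd gc ga) (Nd gb gd)) (Nd ga (Nd gb (Nd gc gd))) = False" by code_simp
lemma st_6_5: "same_topology (Nd ga (Nd (Nd gb gc) gd)) (Nd ga (Nd gb (Nd gc gd))) = False" by code_simp
lemma st_6_6: "same_topology (Nd ga (Nd (Nd gb gd) gc)) (Nd ga (Nd gb (Nd gc gd))) = False" by code_simp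
lemma st_6_7: "same_topology (Nd ga (Nd (Nd gc gd) gb)) (Nd ga (Nd gb (Nd gc gd))) = True" by code_simp
lemma case_6: assumes "y > 0" shows "((\<lambda>x. netP x y 0 \<gamma> (Nd ga (Nd gb (Nd gc gd)))) \<longlongrightarrow> (1 - \<gamma>)^2/3 * exp (-y)) at_top"
  apply (rule netP_lim[THEN tendsto_eq_rhs])
  using assms apply simp
  apply (simp add: root2 is_topology_def st_6_0 st_6_1 st_6_2 st_6_3 st_6_4 st_6_5 st_6_6 st_6_7)
  apply (simp add: field_simps power2_eq_square)?
  done

lemma st_7_0: "same_topology (Nd (Nd (Nd gb gc) ga) gd) (Nd (Nd (Nd gb gd) gc) ga) = False" by code_simp
lemma st_7_1: "same_topology (Nd (Nd (Nd gb ga) gc) gd) (Nd (Nd (Nd gb gd) gc) ga) = False" by code_simp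
lemma st_7_2: "same_topology (Nd (Nd (Nd gc ga) gb) gd) (Nd (Nd (Nd gb gd) gc) ga) = False" by code_simp
lemma st_7_3: "same_topology (Nd (Nd gb ga) (Nd gc gd)) (Nd (Nd (Nd gb gd) gc) ga) = False" by code_simp
lemma st_7_4: "same_topology (Nd (Nd gc ga) (Nd gb gd)) (Nd (Nd (Nd gb gd) gc) ga) = False" by code_simp
lemma st_7_5: "same_topology (Nd ga (Nd (Nd gb gc) gd)) (Nd (Nd (Nd gb gd) gc) ga) = False" by code_simp
lemma st_7_6: "same_topology (Nd ga (Nd (Nd gb gd) gc)) (Nd (Nd (Nd gb gd) gc) ga) = True" by code_simp
lemma st_7_7: "same_topology (Nd ga (Nd (Nd gc gd) gb)) (Nd (Nd (Nd gb gd) gc) ga) = False" by code_simp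
lemma case_7: assumes "y > 0" shows "((\<lambda>x. netP x y 0 \<gamma> (Nd (Nd (Nd gb gd) gc) ga)) \<longlongrightarrow> (1 - \<gamma>)^2/3 * exp (-y)) at_top"
  apply (rule netP_lim[THEN tendsto_eq_rhs])
  using assms apply simp
  apply (simp add: root2 is_topology_def st_7_0 st_7_1 st_7_2 st_7_3 st_7_4 st_7_5 st_7_6 st_7_7)
  apply (simp add: field_simps power2_eq_square)?
  done

lemma st_8_0: "same_topology (Nd (Nd (Nd gb gc) ga) gd) (Nd (Nd ga gd) (Nd gb gc)) = False" by code_simp
lemma st_8_1: "same_topology (Nd (Nd (Nd gb ga) gc) gd) (Nd (Nd ga gd) (Nd gb gc)) = False" by code_simp
lemma st_8_2: "same_topology (Nd (Nd (Nd gc ga) gb) gd) (Nd (Nd ga gd) (Nd gb gc)) = False" by code_simp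
lemma st_8_3: "same_topology (Nd (Nd gb ga) (Nd gc gd)) (Nd (Nd ga gd) (Nd gb gc)) = False" by code_simp
lemma st_8_4: "same_topology (Nd (Nd gc ga) (Nd gb gd)) (Nd (Nd ga gd) (Nd gb gc)) = False" by code_simp
lemma st_8_5: "same_topology (Nd ga (Nd (Nd gb gc) gd)) (Nd (Nd ga gd) (Nd gb gc)) = False" by code_simp
lemma st_8_6: "same_topology (Nd ga (Nd (Nd gb gd) gc)) (Nd (Nd ga gd) (Nd gb gc)) = False" by code_simp
lemma st_8_7: "same_topology (Nd ga (Nd (Nd gc gd) gb)) (Nd (Nd ga gd) (Nd gb gc)) = False" by code_simp
lemma case_8: assumes "y > 0" shows "((\<lambda>x. netP x y 0 \<gamma> (Nd (Nd ga gd) (Nd gb gc))) \<longlongrightarrow> 0) at_top"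
  apply (rule netP_lim[THEN tendsto_eq_rhs])
  using assms apply simp
  apply (simp add: root2 is_topology_def st_8_0 st_8_1 st_8_2 st_8_3 st_8_4 st_8_5 st_8_6 st_8_7)
  apply (simp add: field_simps power2_eq_square)?
  done

lemma st_9_0: "same_topology (Nd (Nd (Nd gb gc) ga) gd) (Nd (Nd (Nd ga gb) gd) gc) = False" by code_simp
lemma st_9_1: "same_topology (Nd (Nd (Nd gb ga) gc) gd) (Nd (Nd (Nd ga gb) gd) gc) = False" by code_simp
lemma st_9_2: "same_topology (Nd (Nd (Nd gc ga) gb) gd) (Nd (Nd (Nd ga gb) gd) gc) = False" by code_simp
lemma st_9_3: "same_topology (Nd (Nd gb ga) (Nd gc gd)) (Nd (Nd (Nd ga gb) gd) gc) = False" by code_simp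
lemma st_9_4: "same_topology (Nd (Nd gc ga) (Nd gb gd)) (Nd (Nd (Nd ga gb) gd) gc) = False" by code_simp
lemma st_9_5: "same_topology (Nd ga (Nd (Nd gb gc) gd)) (Nd (Nd (Nd ga gb) gd) gc) = False" by code_simp
lemma st_9_6: "same_topology (Nd ga (Nd (Nd gb gd) gc)) (Nd (Nd (Nd ga gb) gd) gc) = False" by code_simp
lemma st_9_7: "same_topology (Nd ga (Nd (Nd gc gd) gb)) (Nd (Nd (Nd ga gb) gd) gc) = False" by code_simp
lemma case_9: assumes "y > 0" shows "((\<lambda>x. netP x y 0 \<gamma> (Nd (Nd (Nd ga gb) gd) gc)) \<longlongrightarrow> 0) at_top"
  apply (rule netP_lim[THEN tendsto_eq_rhs])
  using assms apply simp
  apply (simp add: root2 is_topology_def st_9_0 st_9_1 st_9_2 st_9_3 st_9_4 st_9_5 st_9_6 st_9_7)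
  apply (simp add: field_simps power2_eq_square)?
  done

lemma st_10_0: "same_topology (Nd (Nd (Nd gb gc) ga) gd) (Nd gb (Nd ga (Nd gc gd))) = False" by code_simp
lemma st_10_1: "same_topology (Nd (Nd (Nd gb ga) gc) gd) (Nd gb (Nd ga (Nd gc gd))) = False" by code_simp
lemma st_10_2: "same_topology (Nd (Nd (Nd gc ga) gb) gd) (Nd gb (Nd ga (Nd gc gd))) = False" by code_simp
lemma st_10_3: "same_topology (Nd (Nd gb ga) (Nd gc gd)) (Nd gb (Nd ga (Nd gc gd))) = False" by code_simp
lemma st_10_4: "same_topology (Nd (Nd gc ga) (Nd gb gd)) (Nd gb (Nd ga (Nd gc gd))) = False" by code_simp
lemma st_10_5: "same_topology (Nd ga (Nd (Nd gb gc) gd)) (Nd gb (Nd ga (Nd gc gd))) = False" by code_simp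
lemma st_10_6: "same_topology (Nd ga (Nd (Nd gb gd) gc)) (Nd gb (Nd ga (Nd gc gd))) = False" by code_simp
lemma st_10_7: "same_topology (Nd ga (Nd (Nd gc gd) gb)) (Nd gb (Nd ga (Nd gc gd))) = False" by code_simp
lemma case_10: assumes "y > 0" shows "((\<lambda>x. netP x y 0 \<gamma> (Nd gb (Nd ga (Nd gc gd)))) \<longlongrightarrow> 0) at_top"
  apply (rule netP_lim[THEN tendsto_eq_rhs])
  using assms apply simp
  apply (simp add: root2 is_topology_def st_10_0 st_10_1 st_10_2 st_10_3 st_10_4 st_10_5 st_10_6 st_10_7)
  apply (simp add: field_simps power2_eq_square)?
  done

lemma st_11_0: "same_topology (Nd (Nd (Nd gb gc) ga) gd) (Nd (Nd (Nd ga gd) gb) gc) = False" by code_simp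
lemma st_11_1: "same_topology (Nd (Nd (Nd gb ga) gc) gd) (Nd (Nd (Nd ga gd) gb) gc) = False" by code_simp
lemma st_11_2: "same_topology (Nd (Nd (Nd gc ga) gb) gd) (Nd (Nd (Nd ga gd) gb) gc) = False" by code_simp
lemma st_11_3: "same_topology (Nd (Nd gb ga) (Nd gc gd)) (Nd (Nd (Nd ga gd) gb) gc) = False" by code_simp
lemma st_11_4: "same_topology (Nd (Nd gc ga) (Nd gb gd)) (Nd (Nd (Nd ga gd) gb) gc) = False" by code_simp
lemma st_11_5: "same_topology (Nd ga (Nd (Nd gb gc) gd)) (Nd (Nd (Nd ga gd) gb) gc) = False" by code_simp
lemma st_11_6: "same_topology (Nd ga (Nd (Nd gb gd) gc)) (Nd (Nd (Nd ga gd) gb) gc) = False" by code_simp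
lemma st_11_7: "same_topology (Nd ga (Nd (Nd gc gd) gb)) (Nd (Nd (Nd ga gd) gb) gc) = False" by code_simp
lemma case_11: assumes "y > 0" shows "((\<lambda>x. netP x y 0 \<gamma> (Nd (Nd (Nd ga gd) gb) gc)) \<longlongrightarrow> 0) at_top"
  apply (rule netP_lim[THEN tendsto_eq_rhs])
  using assms apply simp
  apply (simp add: root2 is_topology_def st_11_0 st_11_1 st_11_2 st_11_3 st_11_4 st_11_5 st_11_6 st_11_7)
  apply (simp add: field_simps power2_eq_square)?
  done

lemma st_12_0: "same_topology (Nd (Nd (Nd gb gc) ga) gd) (Nd (Nd (Nd gb gd) ga) gc) = False" by code_simp
lemma st_12_1: "same_topology (Nd (Nd (Nd gb ga) gc) gd) (Nd (Nd (Nd gb gd) ga) gc) = False" by code_simp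
lemma st_12_2: "same_topology (Nd (Nd (Nd gc ga) gb) gd) (Nd (Nd (Nd gb gd) ga) gc) = False" by code_simp
lemma st_12_3: "same_topology (Nd (Nd gb ga) (Nd gc gd)) (Nd (Nd (Nd gb gd) ga) gc) = False" by code_simp
lemma st_12_4: "same_topology (Nd (Nd gc ga) (Nd gb gd)) (Nd (Nd (Nd gb gd) ga) gc) = False" by code_simp
lemma st_12_5: "same_topology (Nd ga (Nd (Nd gb gc) gd)) (Nd (Nd (Nd gb gd) ga) gc) = False" by code_simp
lemma st_12_6: "same_topology (Nd ga (Nd (Nd gb gd) gc)) (Nd (Nd (Nd gb gd) ga) gc) = False" by code_simp
lemma st_12_7: "same_topology (Nd ga (Nd (Nd gc gd) gb)) (Nd (Nd (Nd gb gd) ga) gc) = False" by code_simp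
lemma case_12: assumes "y > 0" shows "((\<lambda>x. netP x y 0 \<gamma> (Nd (Nd (Nd gb gd) ga) gc)) \<longlongrightarrow> 0) at_top"
  apply (rule netP_lim[THEN tendsto_eq_rhs])
  using assms apply simp
  apply (simp add: root2 is_topology_def st_12_0 st_12_1 st_12_2 st_12_3 st_12_4 st_12_5 st_12_6 st_12_7)
  apply (simp add: field_simps power2_eq_square)?
  done

lemma st_13_0: "same_topology (Nd (Nd (Nd gb gc) ga) gd) (Nd (Nd (Nd ga gc) gd) gb) = False" by code_simp
lemma st_13_1: "same_topology (Nd (Nd (Nd gb ga) gc) gd) (Nd (Nd (Nd ga gc) gd) gb) = False" by code_simp
lemma st_13_2: "same_topology (Nd (Nd (Nd gc ga) gb) gd) (Nd (Nd (Nd ga gc) gd) gb) = False" by code_simp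
lemma st_13_3: "same_topology (Nd (Nd gb ga) (Nd gc gd)) (Nd (Nd (Nd ga gc) gd) gb) = False" by code_simp
lemma st_13_4: "same_topology (Nd (Nd gc ga) (Nd gb gd)) (Nd (Nd (Nd ga gc) gd) gb) = False" by code_simp
lemma st_13_5: "same_topology (Nd ga (Nd (Nd gb gc) gd)) (Nd (Nd (Nd ga gc) gd) gb) = False" by code_simp
lemma st_13_6: "same_topology (Nd ga (Nd (Nd gb gd) gc)) (Nd (Nd (Nd ga gc) gd) gb) = False" by code_simp
lemma st_13_7: "same_topology (Nd ga (Nd (Nd gc gd) gb)) (Nd (Nd (Nd ga gc) gd) gb) = False" by code_simp
lemma case_13: assumes "y > 0" shows "((\<lambda>x. netP x y 0 \<gamma> (Nd (Nd (Nd ga gc) gd) gb)) \<longlongrightarrow> 0) at_top"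
  apply (rule netP_lim[THEN tendsto_eq_rhs])
  using assms apply simp
  apply (simp add: root2 is_topology_def st_13_0 st_13_1 st_13_2 st_13_3 st_13_4 st_13_5 st_13_6 st_13_7)
  apply (simp add: field_simps power2_eq_square)?
  done

lemma st_14_0: "same_topology (Nd (Nd (Nd gb gc) ga) gd) (Nd (Nd (Nd ga gd) gc) gb) = False" by code_simp
lemma st_14_1: "same_topology (Nd (Nd (Nd gb ga) gc) gd) (Nd (Nd (Nd ga gd) gc) gb) = False" by code_simp
lemma st_14_2: "same_topology (Nd (Nd (Nd gc ga) gb) gd) (Nd (Nd (Nd ga gd) gc) gb) = False" by code_simp
lemma st_14_3: "same_topology (Nd (Nd gb ga) (Nd gc gd)) (Nd (Nd (Nd ga gd) gc) gb) = False" by code_simp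
lemma st_14_4: "same_topology (Nd (Nd gc ga) (Nd gb gd)) (Nd (Nd (Nd ga gd) gc) gb) = False" by code_simp
lemma st_14_5: "same_topology (Nd ga (Nd (Nd gb gc) gd)) (Nd (Nd (Nd ga gd) gc) gb) = False" by code_simp
lemma st_14_6: "same_topology (Nd ga (Nd (Nd gb gd) gc)) (Nd (Nd (Nd ga gd) gc) gb) = False" by code_simp
lemma st_14_7: "same_topology (Nd ga (Nd (Nd gc gd) gb)) (Nd (Nd (Nd ga gd) gc) gb) = False" by code_simp
lemma case_14: assumes "y > 0" shows "((\<lambda>x. netP x y 0 \<gamma> (Nd (Nd (Nd ga gd) gc) gb)) \<longlongrightarrow> 0) at_top"
  apply (rule netP_lim[THEN tendsto_eq_rhs])
  using assms apply simp
  apply (simp add: root2 is_topology_def st_14_0 st_14_1 st_14_2 st_14_3 st_14_4 st_14_5 st_14_6 st_14_7)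
  apply (simp add: field_simps power2_eq_square)?
  done



theorem mainTheorem2:
  fixes y \<gamma> :: real
  assumes "y > 0" and "0 \<le> \<gamma>" and "\<gamma> \<le> 1"
  shows
   "((\<lambda>x. netP x y 0 \<gamma> (Nd (Nd (Nd gb gc) ga) gd)) \<longlongrightarrow> \<gamma> - (\<gamma> - \<gamma>^2/3) * exp (-y)) at_top
  \<and> ((\<lambda>x. netP x y 0 \<gamma> (Nd (Nd (Nd gb gc) gd) ga)) \<longlongrightarrow> (1 - \<gamma>) - (2/3 - \<gamma>/3 - \<gamma>^2/3) * exp (-y)) at_top
  \<and> ((\<lambda>x. netP x y 0 \<gamma> (Nd (Nd ga gb) (Nd gc gd))) \<longlongrightarrow> \<gamma> * (1 - \<gamma>) * exp (-y)) at_top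
  \<and> ((\<lambda>x. netP x y 0 \<gamma> (Nd (Nd ga gc) (Nd gb gd))) \<longlongrightarrow> \<gamma> * (1 - \<gamma>) * exp (-y)) at_top
  \<and> ((\<lambda>x. netP x y 0 \<gamma> (Nd (Nd (Nd ga gb) gc) gd)) \<longlongrightarrow> \<gamma>^2/3 * exp (-y)) at_top
  \<and> ((\<lambda>x. netP x y 0 \<gamma> (Nd (Nd (Nd ga gc) gb) gd)) \<longlongrightarrow> \<gamma>^2/3 * exp (-y)) at_top
  \<and> ((\<lambda>x. netP x y 0 \<gamma> (Nd ga (Nd gb (Nd gc gd)))) \<longlongrightarrow> (1 - \<gamma>)^2/3 * exp (-y)) at_top
  \<and> ((\<lambda>x. netP x y 0 \<gamma> (Nd (Nd (Nd gb gd) gc) ga)) \<longlongrightarrow> (1 - \<gamma>)^2/3 * exp (-y)) at_top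
  \<and> ((\<lambda>x. netP x y 0 \<gamma> (Nd (Nd ga gd) (Nd gb gc))) \<longlongrightarrow> 0) at_top
  \<and> ((\<lambda>x. netP x y 0 \<gamma> (Nd (Nd (Nd ga gb) gd) gc)) \<longlongrightarrow> 0) at_top
  \<and> ((\<lambda>x. netP x y 0 \<gamma> (Nd gb (Nd ga (Nd gc gd)))) \<longlongrightarrow> 0) at_top
  \<and> ((\<lambda>x. netP x y 0 \<gamma> (Nd (Nd (Nd ga gd) gb) gc)) \<longlongrightarrow> 0) at_top
  \<and> ((\<lambda>x. netP x y 0 \<gamma> (Nd (Nd (Nd gb gd) ga) gc)) \<longlongrightarrow> 0) at_top
  \<and> ((\<lambda>x. netP x y 0 \<gamma> (Nd (Nd (Nd ga gc) gd) gb)) \<longlongrightarrow> 0) at_top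
  \<and> ((\<lambda>x. netP x y 0 \<gamma> (Nd (Nd (Nd ga gd) gc) gb)) \<longlongrightarrow> 0) at_top"
    using case_0[OF assms(1)] case_1[OF assms(1)] case_2[OF assms(1)] case_3[OF assms(1)]
    case_4[OF assms(1)] case_5[OF assms(1)] case_6[OF assms(1)] case_7[OF assms(1)]
    case_8[OF assms(1)] case_9[OF assms(1)] case_10[OF assms(1)] case_11[OF assms(1)]
    case_12[OF assms(1)] case_13[OF assms(1)] case_14[OF assms(1)]
  by blast

end
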